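(* Let $X$ be a quasigeodesic metric space with bounded geometry (for example a connected graph with uniformly bounded vertex degrees, with its path metric). (i) If $\lim_{l\to\infty}\frac1l\log\big(\sup_{y\in X}|B(y,l)|\big)=0$, then $h_\infty(X)=0$. (ii) If $\limsup_{l\to\infty}\frac1l\log\big(\sup_{y\in X}|B(y,l)|\big)>0$, then $h_\infty(X)=\infty$.
   Context: $B(y,l)$ is the closed ball. $X$ is quasigeodesic if there are $C\ge1,A\ge0$ such that any $x,x'$ are joined by a map $p\colon[0,d(x,x')]\to X$, $p(0)=x$, $p(d(x,x'))=x'$, with $C^{-1}|s-t|-A\le d(p(s),p(t))\le C|s-t|+A$. Bounded geometry: for every $r>0$ closed balls of radius $r$ have uniformly bounded cardinality. Coarse entropy $h_\infty(X)=\lim_{\delta\to\infty}\lim_{R\to\infty}\limsup_{n\to\infty}\frac1n\log s(n,R,\delta,x_0)$, where $s(n,R,\delta,x_0)$ is the supremum of cardinalities of $R$-separated sets of $\delta$-paths $(x_0,\dots,x_n)$ ($d(x_i,x_{i+1})\le\delta$) starting at $x_0$, paths compared by $\max_i d(x_i,y_i)$. *)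

theory Defs
  imports "HOL-Analysis.Analysis"
begin

text \<open>The metric space X is the whole of a type of class metric_space.\<close>

definition quasigeodesic :: "'a::metric_space itself \<Rightarrow> bool" where
  "quasigeodesic _ \<longleftrightarrow> (\<exists>C::real. \<exists>A::real. C \<ge> 1 \<and> A \<ge> 0 \<and>
     (\<forall>x x'::'a. \<exists>p::real \<Rightarrow> 'a. p 0 = x \<and> p (dist x x') = x' \<and>
        (\<forall>s\<in>{0..dist x x'}. \<forall>t\<in>{0..dist x x'}.
           \<bar>s - t\<bar> / C - A \<le> dist (p s) (p t) \<and> dist (p s) (p t) \<le> C * \<bar>s - t\<bar> + A)))"

definition bounded_geometry :: "'a::metric_space itself \<Rightarrow> bool" where
  "bounded_geometry _ \<longleftrightarrow> (\<forall>r>0. \<exists>N::nat. \<forall>y::'a. finite (cball y r) \<and> card (cball y r) \<le> N)"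

definition ball_growth :: "'a::metric_space itself \<Rightarrow> real \<Rightarrow> real" where
  "ball_growth _ l = Sup {real (card (cball (y::'a) l)) | y. True}"

definition delta_paths :: "nat \<Rightarrow> real \<Rightarrow> 'a::metric_space \<Rightarrow> 'a list set" where
  "delta_paths n \<delta> x0 = {xs. length xs = Suc n \<and> xs ! 0 = x0 \<and>
       (\<forall>i<n. dist (xs ! i) (xs ! Suc i) \<le> \<delta>)}"

text \<open>R-separated w.r.t. the distance max_i d(x_i,y_i)\<close>
definition path_separated :: "nat \<Rightarrow> real \<Rightarrow> 'a::metric_space list set \<Rightarrow> bool" where
  "path_separated n R S \<longleftrightarrow> (\<forall>p\<in>S. \<forall>q\<in>S. p \<noteq> q \<longrightarrow> (\<exists>i\<le>n. dist (p ! i) (q ! i) > R))"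

definition sep_count :: "nat \<Rightarrow> real \<Rightarrow> real \<Rightarrow> 'a::metric_space \<Rightarrow> ereal" where
  "sep_count n R \<delta> x0 = Sup {ereal (real (card S)) | S. finite S \<and> S \<subseteq> delta_paths n \<delta> x0 \<and> path_separated n R S}"

definition ereal_ln :: "ereal \<Rightarrow> ereal" where
  "ereal_ln x = (case x of ereal r \<Rightarrow> ereal (ln r) | PInfty \<Rightarrow> \<infinity> | MInfty \<Rightarrow> -\<infinity>)"

definition coarse_entropy :: "'a::metric_space \<Rightarrow> ereal" where
  "coarse_entropy x0 = Lim at_top (\<lambda>\<delta>::real. Lim at_top (\<lambda>R::real.
       limsup (\<lambda>n. ereal_ln (sep_count n R \<delta> x0) / ereal (real n))))"

end

theory Submission imports Defs begin

lemma bg_finite: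
  assumes "bounded_geometry TYPE('a::metric_space)"
  shows "finite (cball (y::'a) r)"
proof -
  obtain N where "\<forall>y::'a. finite (cball y (max r 1)) \<and> card (cball y (max r 1)) \<le> N"
    using assms unfolding bounded_geometry_def by (meson less_max_iff_disj zero_less_one)
  hence "finite (cball y (max r 1))" by blast
  moreover have "cball y r \<subseteq> cball y (max r 1)" by auto
  ultimately show ?thesis by (rule finite_subset[rotated])
qed

lemma bg_bdd:
  assumes "bounded_geometry TYPE('a::metric_space)"
  shows "bdd_above {real (card (cball (y::'a) l)) | y. True}"
proof -
  obtain N where N: "\<forall>y::'a. finite (cball y (max l 1)) \<and> card (cball y (max l 1)) \<le> N"
    using assms unfolding bounded_geometry_def by (meson less_max_iff_disj zero_less_one)
  have "card (cball (y::'a) l) \<le> N" for y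
  proof -
    have "card (cball y l) \<le> card (cball y (max l 1))"
      by (rule card_mono) (use N in auto)
    thus ?thesis using N by (meson order_trans)
  qed
  thus ?thesis unfolding bdd_above_def by (auto intro!: exI[of _ "real N"])
qed

lemma bg_le:
  assumes "bounded_geometry TYPE('a::metric_space)"
  shows "real (card (cball (y::'a) l)) \<le> ball_growth TYPE('a) l"
  unfolding ball_growth_def by (rule cSup_upper) (use bg_bdd[OF assms] in auto)

lemma bg_ge1:
  assumes "bounded_geometry TYPE('a::metric_space)" "l \<ge> 0"
  shows "1 \<le> ball_growth TYPE('a) l"
proof -
  obtain y :: 'a where True by auto
  have "card (cball y l) \<ge> 1" using bg_finite[OF assms(1), of y l] assms(2)
    by (metis card_0_eq centre_in_cball empty_iff less_one not_le)
  thus ?thesis using bg_le[OF assms(1), of y l] by linarith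
qed

lemma dp_dist:
  assumes "xs \<in> delta_paths n \<delta> x0" "i \<le> j" "j \<le> n"
  shows "dist (xs ! i) (xs ! j) \<le> real (j - i) * \<delta>"
  using assms(2,3)
proof (induction j)
  case 0 thus ?case by simp
next
  case (Suc j)
  show ?case
  proof (cases "i = Suc j")
    case True thus ?thesis by simp
  next
    case False
    hence "i \<le> j" using Suc by simp
    have "dist (xs ! i) (xs ! Suc j) \<le> dist (xs ! i) (xs ! j) + dist (xs ! j) (xs ! Suc j)"
      by (rule dist_triangle)
    also have "\<dots> \<le> real (j - i) * \<delta> + \<delta>"
    proof (rule add_mono)
      show "dist (xs ! i) (xs ! j) \<le> real (j - i) * \<delta>" using Suc.IH[OF \<open>i \<le> j\<close>] Suc.prems by simp
      show "dist (xs ! j) (xs ! Suc j) \<le> \<delta>" using Suc.prems assms(1) unfolding delta_paths_def by auto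
    qed
    also have "\<dots> = real (Suc j - i) * \<delta>" using \<open>i \<le> j\<close> by (simp add: Suc_diff_le algebra_simps)
    finally show ?thesis .
  qed
qed

lemma dp_count:
  assumes "bounded_geometry TYPE('a::metric_space)"
  shows "finite (delta_paths J L (x0::'a)) \<and> real (card (delta_paths J L x0)) \<le> ball_growth TYPE('a) L ^ J"
proof (induction J)
  case 0
  have "delta_paths 0 L x0 = {[x0]}"
    unfolding delta_paths_def by (auto simp: length_Suc_conv)
  thus ?case by simp
next
  case (Suc J)
  let ?D = "delta_paths J L x0"
  have sub: "delta_paths (Suc J) L x0 \<subseteq> (\<lambda>(ys,z). ys @ [z]) ` (SIGMA ys:?D. cball (last ys) L)"
  proof
    fix xs assume xs: "xs \<in> delta_paths (Suc J) L x0"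
    hence len: "length xs = Suc (Suc J)" unfolding delta_paths_def by auto
    define ys where "ys = butlast xs"
    have xe: "xs = ys @ [last xs]" unfolding ys_def using len
      by (metis append_butlast_last_id list.size(3) nat.distinct(1))
    have ly: "length ys = Suc J" unfolding ys_def using len by simp
    have nth: "ys ! i = xs ! i" if "i < Suc J" for i unfolding ys_def using that len
      by (simp add: nth_butlast)
    have "ys \<in> ?D" unfolding delta_paths_def using xs ly nth unfolding delta_paths_def by auto
    moreover have "last ys = xs ! J"
    proof -
      have "last ys = ys ! J" using ly by (metis diff_Suc_1 last_conv_nth list.size(3) nat.distinct(1))
      thus ?thesis using nth by simp
    qed
    moreover have "last xs = xs ! Suc J" using len by (metis diff_Suc_1 last_conv_nth list.size(3) nat.distinct(1))
    moreover have "dist (xs ! J) (xs ! Suc J) \<le> L" using xs unfolding delta_paths_def by auto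
    ultimately show "xs \<in> (\<lambda>(ys,z). ys @ [z]) ` (SIGMA ys:?D. cball (last ys) L)"
      using xe by (intro image_eqI[of _ _ "(ys, last xs)"]) auto
  qed
  have fS: "finite (SIGMA ys:?D. cball (last ys) L)"
    using Suc.IH bg_finite[OF assms] by auto
  have "card (SIGMA ys:?D. cball (last ys) L) = (\<Sum>ys\<in>?D. card (cball (last ys) L))"
    using Suc.IH bg_finite[OF assms] by (simp add: card_SigmaI)
  hence "real (card (SIGMA ys:?D. cball (last ys) L)) = (\<Sum>ys\<in>?D. real (card (cball (last ys) L)))"
    by simp
  also have "\<dots> \<le> (\<Sum>ys\<in>?D. ball_growth TYPE('a) L)"
    by (rule sum_mono) (rule bg_le[OF assms])
  also have "\<dots> = real (card ?D) * ball_growth TYPE('a) L" by simp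
  also have "\<dots> \<le> ball_growth TYPE('a) L ^ J * ball_growth TYPE('a) L"
    using Suc.IH by (intro mult_right_mono) (auto intro: order_trans[OF _ bg_le[OF assms]])
  finally have c: "real (card (SIGMA ys:?D. cball (last ys) L)) \<le> ball_growth TYPE('a) L ^ Suc J"
    by (simp add: mult.commute)
  have "card (delta_paths (Suc J) L x0) \<le> card (SIGMA ys:?D. cball (last ys) L)"
    by (rule order_trans[OF card_mono[OF _ sub] card_image_le]) (use fS in auto)
  thus ?case using c finite_subset[OF sub] fS by auto
qed

lemma sep_upper:
  assumes bg: "bounded_geometry TYPE('a::metric_space)"
    and d: "\<delta> > 0" and k: "k \<ge> 1" and kR: "2 * real k * \<delta> \<le> R"
  shows "sep_count n R \<delta> (x0::'a) \<le> ereal (ball_growth TYPE('a) (real k * \<delta>) ^ (n div k + 1))"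
  unfolding sep_count_def
proof (rule Sup_least, clarify)
  fix S assume fS: "finite S" and SD: "S \<subseteq> delta_paths n \<delta> x0" and sep: "path_separated n R S"
  define J where "J = n div k + 1"
  define sub where "sub = (\<lambda>p::'a list. map (\<lambda>j. p ! min (j*k) n) [0..<Suc J])"
  have subD: "sub p \<in> delta_paths J (real k * \<delta>) x0" if "p \<in> S" for p
  proof -
    have p: "p \<in> delta_paths n \<delta> x0" using that SD by auto
    hence "p ! 0 = x0" unfolding delta_paths_def by auto
    moreover have "dist (p ! min (j*k) n) (p ! min (Suc j * k) n) \<le> real k * \<delta>" for j
    proof -
      have "dist (p ! min (j*k) n) (p ! min (Suc j * k) n) \<le> real (min (Suc j * k) n - min (j*k) n) * \<delta>"
        by (rule dp_dist[OF p]) (auto simp: min_def)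
      also have "\<dots> \<le> real k * \<delta>"
      proof -
        have "min (Suc j * k) n - min (j*k) n \<le> k" unfolding min_def by auto
        thus ?thesis using d by (intro mult_right_mono) auto
      qed
      finally show ?thesis .
    qed
    ultimately show ?thesis unfolding sub_def delta_paths_def
      by (auto simp del: upt_Suc simp: nth_map_upt)
  qed
  have inj: "inj_on sub S"
  proof (rule inj_onI, rule ccontr)
    fix p q assume pS: "p \<in> S" and qS: "q \<in> S" and eq: "sub p = sub q" and ne: "p \<noteq> q"
    obtain i where i: "i \<le> n" "dist (p ! i) (q ! i) > R" using sep pS qS ne unfolding path_separated_def by blast
    define j where "j = i div k"
    have jk: "j * k \<le> i" unfolding j_def by (simp add: div_times_less_eq_dividend)
    have ij: "i - j * k \<le> k - 1" unfolding j_def using k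
      by (metis One_nat_def Suc_le_eq le_diff_conv2 less_Suc_eq_le minus_div_mult_eq_mod mod_less_divisor diff_mult_distrib2 mult.commute add.commute Suc_pred less_le_trans zero_less_one)
    have jJ: "j < Suc J" unfolding J_def j_def using div_le_mono[OF i(1), of k] by simp
    have mn: "min (j*k) n = j*k" using jk i(1) by simp
    have "sub p ! j = sub q ! j" using eq by simp
    hence e: "p ! (j*k) = q ! (j*k)" unfolding sub_def using jJ mn by (simp del: upt_Suc)
    have pp: "p \<in> delta_paths n \<delta> x0" "q \<in> delta_paths n \<delta> x0" using pS qS SD by auto
    have "dist (p ! i) (q ! i) \<le> dist (p ! (j*k)) (p ! i) + dist (q ! (j*k)) (q ! i)"
      using e by (metis dist_commute dist_triangle)
    also have "\<dots> \<le> real (i - j*k) * \<delta> + real (i - j*k) * \<delta>"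
      using dp_dist[OF pp(1) jk i(1)] dp_dist[OF pp(2) jk i(1)] by linarith
    also have "\<dots> \<le> real (k - 1) * \<delta> + real (k - 1) * \<delta>"
      using ij d by (intro add_mono mult_right_mono) auto
    also have "\<dots> < R" using kR d k by (simp add: of_nat_diff algebra_simps)
    finally show False using i(2) by simp
  qed
  have "card S = card (sub ` S)" using inj by (simp add: card_image)
  also have "\<dots> \<le> card (delta_paths J (real k * \<delta>) x0)"
    by (rule card_mono) (use dp_count[OF bg] subD in auto)
  finally have "real (card S) \<le> ball_growth TYPE('a) (real k * \<delta>) ^ J"
    using dp_count[OF bg, of J "real k * \<delta>" x0] by linarith
  thus "ereal (real (card S)) \<le> ereal (ball_growth TYPE('a) (real k * \<delta>) ^ (n div k + 1))"
    unfolding J_def by simp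
qed

lemma sep_ge1:
  assumes "\<delta> \<ge> 0"
  shows "1 \<le> sep_count n R \<delta> (x0::'a::metric_space)"
proof -
  have "replicate (Suc n) x0 \<in> delta_paths n \<delta> x0" using assms
    unfolding delta_paths_def by (auto simp del: replicate_Suc)
  hence "ereal (real (card {replicate (Suc n) x0})) \<in> {ereal (real (card S)) | S. finite S \<and> S \<subseteq> delta_paths n \<delta> x0 \<and> path_separated n R S}"
    unfolding path_separated_def by blast
  hence "ereal (real (card {replicate (Suc n) x0})) \<le> sep_count n R \<delta> x0"
    unfolding sep_count_def by (rule Sup_upper)
  thus ?thesis by (simp add: one_ereal_def)
qed

lemma eln_nonneg: "1 \<le> s \<Longrightarrow> 0 \<le> ereal_ln s"
  by (cases s) (auto simp: ereal_ln_def)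

lemma eln_le: "1 \<le> s \<Longrightarrow> s \<le> ereal B \<Longrightarrow> ereal_ln s \<le> ereal (ln B)"
  by (cases s) (auto simp: ereal_ln_def)

lemma eln_ge: "0 < B \<Longrightarrow> ereal B \<le> s \<Longrightarrow> ereal (ln B) \<le> ereal_ln s"
  by (cases s) (auto simp: ereal_ln_def)

lemma F_nonneg:
  assumes "\<delta> \<ge> 0"
  shows "0 \<le> limsup (\<lambda>n. ereal_ln (sep_count n R \<delta> (x0::'a::metric_space)) / ereal (real n))"
proof (rule le_Limsup)
  show "\<forall>\<^sub>F n in sequentially. 0 \<le> ereal_ln (sep_count n R \<delta> x0) / ereal (real n)"
    by (rule always_eventually, intro allI zero_le_divide_ereal eln_nonneg[OF sep_ge1[OF assms]]) simp
qed simp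

lemma F_upper:
  assumes bg: "bounded_geometry TYPE('a::metric_space)"
    and d: "\<delta> > 0" and k: "k \<ge> 1" and kR: "2 * real k * \<delta> \<le> R"
  shows "limsup (\<lambda>n. ereal_ln (sep_count n R \<delta> (x0::'a)) / ereal (real n))
           \<le> ereal (ln (ball_growth TYPE('a) (real k * \<delta>)) / real k)"
proof -
  define B where "B = ball_growth TYPE('a) (real k * \<delta>)"
  have B1: "1 \<le> B" unfolding B_def using bg_ge1[OF bg] d by simp
  have lB: "0 \<le> ln B" using B1 by simp
  have ev: "\<forall>\<^sub>F n in sequentially. ereal_ln (sep_count n R \<delta> x0) / ereal (real n)
              \<le> ereal (ln B / real k + ln B / real n)"
  proof (rule eventually_sequentiallyI[of 1])
    fix n :: nat assume n: "1 \<le> n"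
    define J where "J = n div k + 1"
    have "ereal_ln (sep_count n R \<delta> x0) \<le> ereal (ln (B ^ J))"
      by (rule eln_le[OF sep_ge1]) (use sep_upper[OF bg d k kR, of n x0] d in \<open>auto simp: B_def J_def\<close>)
    hence "ereal_ln (sep_count n R \<delta> x0) / ereal (real n) \<le> ereal (ln (B ^ J)) / ereal (real n)"
      using n by (intro ereal_divide_right_mono) auto
    also have "\<dots> = ereal (real J * ln B / real n)" using n B1 by (simp add: ln_realpow)
    also have "real J * ln B / real n \<le> (real n / real k + 1) * ln B / real n"
    proof -
      have "real J \<le> real n / real k + 1" unfolding J_def using of_nat_div_le_of_nat[of n k] by simp
      thus ?thesis using lB n by (intro divide_right_mono mult_right_mono) auto
    qed
    also have "(real n / real k + 1) * ln B / real n = ln B / real k + ln B / real n"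
      using n by (simp add: field_simps)
    finally show "ereal_ln (sep_count n R \<delta> x0) / ereal (real n) \<le> ereal (ln B / real k + ln B / real n)"
      by simp
  qed
  have lim: "(\<lambda>n. ereal (ln B / real k + ln B / real n)) \<longlonglongrightarrow> ereal (ln B / real k)"
    by (intro tendsto_intros lim_const_over_n[THEN tendsto_add[OF tendsto_const], simplified])
  have "limsup (\<lambda>n. ereal_ln (sep_count n R \<delta> (x0::'a)) / ereal (real n))
        \<le> limsup (\<lambda>n. ereal (ln B / real k + ln B / real n))" by (rule Limsup_mono[OF ev])
  also have "\<dots> = ereal (ln B / real k)" by (rule lim_imp_Limsup[OF _ lim]) simp
  finally show ?thesis unfolding B_def .
qed

lemma inner_zero:
  assumes bg: "bounded_geometry TYPE('a::metric_space)"
    and hyp: "((\<lambda>l. ln (ball_growth TYPE('a) l) / l) \<longlongrightarrow> 0) at_top"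
    and d: "\<delta> > 0"
  shows "((\<lambda>R. limsup (\<lambda>n. ereal_ln (sep_count n R \<delta> (x0::'a)) / ereal (real n))) \<longlongrightarrow> 0) at_top"
proof -
  define k where "k = (\<lambda>R::real. nat \<lfloor>R / (2*\<delta>)\<rfloor>)"
  define h where "h = (\<lambda>l. ln (ball_growth TYPE('a) l) / l)"
  have kprops: "k R \<ge> 1 \<and> 2 * real (k R) * \<delta> \<le> R \<and> R / 2 - \<delta> \<le> real (k R) * \<delta>" if R: "R \<ge> 2*\<delta>" for R
  proof -
    have q: "R / (2*\<delta>) \<ge> 1" using R d by simp
    have f1: "real_of_int \<lfloor>R / (2*\<delta>)\<rfloor> \<le> R / (2*\<delta>)" "R / (2*\<delta>) - 1 < real_of_int \<lfloor>R / (2*\<delta>)\<rfloor>"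
      by linarith+
    have "\<lfloor>R / (2*\<delta>)\<rfloor> \<ge> 1" using q by linarith
    hence rk: "real (k R) = real_of_int \<lfloor>R / (2*\<delta>)\<rfloor>" unfolding k_def by simp
    have k1: "k R \<ge> 1" unfolding k_def using \<open>\<lfloor>R / (2*\<delta>)\<rfloor> \<ge> 1\<close> by linarith
    have e: "R / (2*\<delta>) * (2*\<delta>) = R" using d by simp
    have "real (k R) * (2*\<delta>) \<le> R / (2*\<delta>) * (2*\<delta>)"
      using f1(1) d unfolding rk by (intro mult_right_mono) auto
    moreover have "(R / (2*\<delta>) - 1) * (2*\<delta>) \<le> real (k R) * (2*\<delta>)"
      using f1(2) d unfolding rk by (intro mult_right_mono) auto
    ultimately have "2 * real (k R) * \<delta> \<le> R" "R / 2 - \<delta> \<le> real (k R) * \<delta>"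
      using e by (auto simp: algebra_simps)
    thus ?thesis using k1 by blast
  qed
  have kinf: "filterlim (\<lambda>R. real (k R) * \<delta>) at_top at_top"
    unfolding filterlim_at_top
  proof
    fix Z
    show "\<forall>\<^sub>F R in at_top. Z \<le> real (k R) * \<delta>"
      unfolding eventually_at_top_linorder
    proof (rule exI[of _ "2*\<bar>Z\<bar> + 2*\<delta> + 2"], intro allI impI)
      fix R assume R: "R \<ge> 2*\<bar>Z\<bar> + 2*\<delta> + 2"
      hence "R \<ge> 2*\<delta>" by linarith
      from kprops[OF this] R show "Z \<le> real (k R) * \<delta>" by linarith
    qed
  qed
  have "((\<lambda>R. \<delta> * h (real (k R) * \<delta>)) \<longlongrightarrow> \<delta> * 0) at_top"
    by (intro tendsto_mult tendsto_const filterlim_compose[OF hyp[folded h_def] kinf])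
  hence lim: "((\<lambda>R. ereal (\<delta> * h (real (k R) * \<delta>))) \<longlongrightarrow> 0) at_top"
    by (simp add: zero_ereal_def tendsto_ereal)
  show ?thesis
  proof (rule tendsto_sandwich[OF _ _ tendsto_const lim])
    show "\<forall>\<^sub>F R in at_top. 0 \<le> limsup (\<lambda>n. ereal_ln (sep_count n R \<delta> x0) / ereal (real n))"
      by (rule always_eventually, intro allI F_nonneg) (use d in simp)
    show "\<forall>\<^sub>F R in at_top. limsup (\<lambda>n. ereal_ln (sep_count n R \<delta> x0) / ereal (real n))
             \<le> ereal (\<delta> * h (real (k R) * \<delta>))"
      unfolding eventually_at_top_linorder
    proof (rule exI[of _ "2*\<delta>"], intro allI impI)
      fix R assume R: "R \<ge> 2*\<delta>"
      have "limsup (\<lambda>n. ereal_ln (sep_count n R \<delta> x0) / ereal (real n))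
           \<le> ereal (ln (ball_growth TYPE('a) (real (k R) * \<delta>)) / real (k R))"
        using F_upper[OF bg d] kprops[OF R] by blast
      also have "ln (ball_growth TYPE('a) (real (k R) * \<delta>)) / real (k R) = \<delta> * h (real (k R) * \<delta>)"
        unfolding h_def using d kprops[OF R] by (simp add: field_simps)
      finally show "limsup (\<lambda>n. ereal_ln (sep_count n R \<delta> x0) / ereal (real n))
             \<le> ereal (\<delta> * h (real (k R) * \<delta>))" .
    qed
  qed
qed

lemma part_i:
  assumes bg: "bounded_geometry TYPE('a::metric_space)"
    and hyp: "((\<lambda>l. ln (ball_growth TYPE('a) l) / l) \<longlongrightarrow> 0) at_top"
  shows "coarse_entropy (x0::'a) = 0"
proof -
  have "\<forall>\<^sub>F \<delta> in at_top. Lim at_top (\<lambda>R. limsup (\<lambda>n. ereal_ln (sep_count n R \<delta> x0) / ereal (real n))) = 0"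
    unfolding eventually_at_top_linorder
    by (rule exI[of _ 1], intro allI impI tendsto_Lim inner_zero[OF bg hyp]) auto
  hence "((\<lambda>\<delta>. Lim at_top (\<lambda>R. limsup (\<lambda>n. ereal_ln (sep_count n R \<delta> x0) / ereal (real n)))) \<longlongrightarrow> 0) at_top"
    by (rule tendsto_eventually)
  thus ?thesis unfolding coarse_entropy_def by (intro tendsto_Lim) auto
qed

lemma qg_obtain:
  fixes dummy :: "'a::metric_space"
  assumes "quasigeodesic TYPE('a)"
  obtains C A and P :: "'a \<Rightarrow> 'a \<Rightarrow> real \<Rightarrow> 'a" where "C \<ge> 1" "A \<ge> 0"
    "\<And>x x'. P x x' 0 = x" "\<And>x x'. P x x' (dist x x') = x'"
    "\<And>x x' s t. s \<in> {0..dist x x'} \<Longrightarrow> t \<in> {0..dist x x'} \<Longrightarrow> dist (P x x' s) (P x x' t) \<le> C * \<bar>s - t\<bar> + A"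
proof -
  obtain C A :: real where CA: "C \<ge> 1" "A \<ge> 0" and H: "\<forall>x x'::'a. \<exists>p::real \<Rightarrow> 'a. p 0 = x \<and> p (dist x x') = x' \<and>
        (\<forall>s\<in>{0..dist x x'}. \<forall>t\<in>{0..dist x x'}.
           \<bar>s - t\<bar> / C - A \<le> dist (p s) (p t) \<and> dist (p s) (p t) \<le> C * \<bar>s - t\<bar> + A)"
    using assms unfolding quasigeodesic_def by blast
  from H obtain P where "\<forall>x x'::'a. P x x' 0 = x \<and> P x x' (dist x x') = x' \<and>
        (\<forall>s\<in>{0..dist x x'}. \<forall>t\<in>{0..dist x x'}.
           \<bar>s - t\<bar> / C - A \<le> dist (P x x' s) (P x x' t) \<and> dist (P x x' s) (P x x' t) \<le> C * \<bar>s - t\<bar> + A)"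
    by metis
  thus ?thesis using that[of C A P] CA by blast
qed

definition Wk :: "('a \<Rightarrow> 'a \<Rightarrow> real \<Rightarrow> 'a::metric_space) \<Rightarrow> real \<Rightarrow> 'a \<Rightarrow> 'a \<Rightarrow> nat \<Rightarrow> 'a" where
  "Wk P \<tau> x x' i = P x x' (min (real i * \<tau>) (dist x x'))"

lemma Wk0: "P x x' 0 = x \<Longrightarrow> Wk P \<tau> x x' 0 = x"
  unfolding Wk_def by simp

lemma Wk_end: "P x x' (dist x x') = x' \<Longrightarrow> real i * \<tau> \<ge> dist x x' \<Longrightarrow> Wk P \<tau> x x' i = x'"
  unfolding Wk_def by (simp add: min_def)

lemma Wk_step:
  assumes Pd: "\<And>s t. s \<in> {0..dist x x'} \<Longrightarrow> t \<in> {0..dist x x'} \<Longrightarrow> dist (P x x' s) (P x x' t) \<le> C * \<bar>s - t\<bar> + A"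
    and C: "C \<ge> 0" and \<tau>: "\<tau> > 0" and d: "C * \<tau> + A \<le> \<delta>" and ab: "a \<le> Suc b" "b \<le> Suc a"
  shows "dist (Wk P \<tau> x x' a) (Wk P \<tau> x x' b) \<le> \<delta>"
proof -
  let ?s = "min (real a * \<tau>) (dist x x')" and ?t = "min (real b * \<tau>) (dist x x')"
  have st: "?s \<in> {0..dist x x'}" "?t \<in> {0..dist x x'}" using \<tau> by auto
  have "\<bar>real a * \<tau> - real b * \<tau>\<bar> \<le> \<tau>"
  proof -
    have "\<bar>real a - real b\<bar> \<le> 1" using ab by linarith
    hence "\<bar>real a - real b\<bar> * \<tau> \<le> 1 * \<tau>" using \<tau> by (intro mult_right_mono) auto
    thus ?thesis by (simp add: abs_mult left_diff_distrib[symmetric] \<tau>[THEN less_imp_le])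
  qed
  hence "\<bar>?s - ?t\<bar> \<le> \<tau>" by (simp add: min_def) linarith
  hence "C * \<bar>?s - ?t\<bar> + A \<le> C * \<tau> + A" using C by (simp add: mult_left_mono)
  thus ?thesis using Pd[OF st] d unfolding Wk_def by linarith
qed

lemma sep_lower:
  fixes P :: "'a::metric_space \<Rightarrow> 'a \<Rightarrow> real \<Rightarrow> 'a" and y x0 :: 'a
  assumes P0: "\<And>x x'. P x x' 0 = x" and P1: "\<And>x x'. P x x' (dist x x') = x'"
    and Pd: "\<And>x x' s t. s \<in> {0..dist x x'} \<Longrightarrow> t \<in> {0..dist x x'} \<Longrightarrow> dist (P x x' s) (P x x' t) \<le> C * \<bar>s - t\<bar> + A"
    and C: "C \<ge> 0" and \<tau>: "\<tau> > 0" and d: "C * \<tau> + A \<le> \<delta>"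
    and Zf: "finite Z" and Zl: "\<forall>z\<in>Z. real K * \<tau> \<ge> dist y z"
    and sepZ: "\<forall>z\<in>Z. \<forall>z'\<in>Z. z \<noteq> z' \<longrightarrow> dist z z' > R"
    and K: "K \<ge> 1" and K0: "real K0 * \<tau> \<ge> dist x0 y" and n: "K0 \<le> n"
  shows "ereal (real (card Z ^ ((n - K0) div (2*K)))) \<le> sep_count n R \<delta> x0"
proof -
  define J where "J = (n - K0) div (2*K)"
  define e where "e = (\<lambda>z r. Wk P \<tau> y z (if r \<le> K then r else 2*K - r))"
  define pth where "pth = (\<lambda>(c::nat \<Rightarrow> 'a) i. if i < K0 then Wk P \<tau> x0 y i
                              else e (c ((i - K0) div (2*K))) ((i - K0) mod (2*K)))"
  define lst where "lst = (\<lambda>c. map (pth c) [0..<Suc n])"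
  have WS: "dist (Wk P \<tau> u v a) (Wk P \<tau> u v b) \<le> \<delta>" if "a \<le> Suc b" "b \<le> Suc a" for u v a b
    by (rule Wk_step[OF Pd C \<tau> d that])
  have e0: "e z 0 = y" for z unfolding e_def by (simp add: Wk0 P0)
  have e2K: "e z (2*K) = y" for z unfolding e_def using K by (simp add: Wk0 P0)
  have eK: "z \<in> Z \<Longrightarrow> e z K = z" for z unfolding e_def using Zl by (simp add: Wk_end P1)
  have estep: "dist (e z r) (e z (Suc r)) \<le> \<delta>" for z r
    unfolding e_def by (rule WS) auto
  have WK0: "Wk P \<tau> x0 y K0 = y" using K0 by (simp add: Wk_end P1)
  have K2: "0 < 2*K" using K by simp
  have pstep: "dist (pth c i) (pth c (Suc i)) \<le> \<delta>" for c i
  proof (cases "Suc i < K0")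
    case True thus ?thesis unfolding pth_def using WS[of i "Suc i"] by simp
  next
    case F: False
    show ?thesis
    proof (cases "Suc i = K0")
      case True
      hence "pth c (Suc i) = Wk P \<tau> x0 y (Suc i)" unfolding pth_def using e0 WK0 by simp
      moreover have "pth c i = Wk P \<tau> x0 y i" unfolding pth_def using True by simp
      ultimately show ?thesis using WS[of i "Suc i"] by simp
    next
      case False
      hence iK: "K0 \<le> i" using F by simp
      define t where "t = i - K0"
      have st: "Suc i - K0 = Suc t" unfolding t_def using iK by simp
      have pi: "pth c i = e (c (t div (2*K))) (t mod (2*K))" unfolding pth_def t_def using iK by simp
      have ps: "pth c (Suc i) = e (c (Suc t div (2*K))) (Suc t mod (2*K))" unfolding pth_def using iK st by simp
      show ?thesis
      proof (cases "Suc (t mod (2*K)) < 2*K")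
        case True
        hence "Suc t div (2*K) = t div (2*K)" "Suc t mod (2*K) = Suc (t mod (2*K))"
          by (simp_all add: div_Suc mod_Suc)
        thus ?thesis using pi ps estep by simp
      next
        case False
        hence eqm: "Suc (t mod (2*K)) = 2*K" using K2 by (meson Suc_lessI mod_less_divisor)
        hence "Suc t mod (2*K) = 0" by (simp add: mod_Suc)
        hence "pth c (Suc i) = y" using ps e0 by simp
        also have "y = e (c (t div (2*K))) (Suc (t mod (2*K)))" using eqm e2K by simp
        finally show ?thesis using pi estep by simp
      qed
    qed
  qed
  have p0: "pth c 0 = x0" for c
  proof (cases "K0 = 0")
    case True
    hence "dist x0 y \<le> 0" using K0 by simp
    hence "y = x0" by simp
    thus ?thesis unfolding pth_def using True e0 by simp
  next
    case False thus ?thesis unfolding pth_def by (simp add: Wk0 P0)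
  qed
  have lstD: "lst c \<in> delta_paths n \<delta> x0" for c
    unfolding lst_def delta_paths_def using p0 pstep
    by (auto simp del: upt_Suc simp: nth_map_upt)
  have pK: "pth c (K0 + 2*K*j + K) = c j" if "c j \<in> Z" for c j
  proof -
    have "(2*K*j + K) div (2*K) = j" "(2*K*j + K) mod (2*K) = K" using K
      by (simp_all add: div_mult_self3 mult.commute)
    thus ?thesis unfolding pth_def using eK[OF that] K by simp
  qed
  have sep_c: "\<exists>i\<le>n. dist (lst c ! i) (lst c' ! i) > R \<and> lst c ! i \<noteq> lst c' ! i"
    if c: "c \<in> PiE {0..<J} (\<lambda>_. Z)" "c' \<in> PiE {0..<J} (\<lambda>_. Z)" "c \<noteq> c'" for c c'
  proof -
    obtain j where j: "j < J" "c j \<noteq> c' j"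
      using c by (metis PiE_E atLeastLessThan_iff ext zero_le)
    have cj: "c j \<in> Z" "c' j \<in> Z" using c j by auto
    define i where "i = K0 + 2*K*j + K"
    have "2*K*j + K < 2*K*(j+1)" using K by simp
    also have "2*K*(j+1) \<le> 2*K*J" using j(1) by (intro mult_le_mono2) simp
    also have "2*K*J \<le> n - K0" unfolding J_def by simp
    finally have i: "i \<le> n" unfolding i_def using n by linarith
    have "lst c ! i = c j" "lst c' ! i = c' j"
      unfolding lst_def using i pK cj unfolding i_def by (simp_all del: upt_Suc add: nth_map_upt)
    thus ?thesis using i sepZ cj j by auto
  qed
  have inj: "inj_on lst (PiE {0..<J} (\<lambda>_. Z))"
    by (rule inj_onI) (metis sep_c)
  define S where "S = lst ` PiE {0..<J} (\<lambda>_. Z)"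
  have fS: "finite S" unfolding S_def using Zf by (simp add: finite_PiE)
  have cS: "card S = card Z ^ J" unfolding S_def using inj by (simp add: card_image card_PiE)
  have SD: "S \<subseteq> delta_paths n \<delta> x0" unfolding S_def using lstD by auto
  have sS: "path_separated n R S" unfolding path_separated_def S_def
    using sep_c by (auto, metis)
  show ?thesis unfolding sep_count_def J_def[symmetric]
    by (rule Sup_upper) (use fS cS SD sS in \<open>auto intro!: exI[of _ S]\<close>)
qed

lemma max_sep_subset:
  fixes B :: "'a::metric_space set"
  assumes "finite B" and R0: "R \<ge> 0"
  shows "\<exists>Z\<subseteq>B. (\<forall>z\<in>Z. \<forall>z'\<in>Z. z \<noteq> z' \<longrightarrow> dist z z' > R) \<and> (\<forall>b\<in>B. \<exists>z\<in>Z. dist b z \<le> R)"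
  using assms
proof (induction B rule: finite_induct)
  case empty thus ?case by auto
next
  case (insert b B)
  then obtain Z where Z: "Z \<subseteq> B" "\<forall>z\<in>Z. \<forall>z'\<in>Z. z \<noteq> z' \<longrightarrow> dist z z' > R" "\<forall>b\<in>B. \<exists>z\<in>Z. dist b z \<le> R"
    by blast
  show ?case
  proof (cases "\<exists>z\<in>Z. dist b z \<le> R")
    case True thus ?thesis using Z by (intro exI[of _ Z]) auto
  next
    case False
    thus ?thesis using Z
      by (intro exI[of _ "insert b Z"]) (auto simp: dist_commute not_le R0)
  qed
qed

lemma card_cover:
  assumes bg: "bounded_geometry TYPE('a::metric_space)" and R: "R > 0"
    and B: "finite (B::'a set)" and Z: "Z \<subseteq> B" and cov: "\<forall>b\<in>B. \<exists>z\<in>Z. dist b z \<le> R"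
  shows "real (card B) \<le> real (card Z) * ball_growth TYPE('a) R"
proof -
  have fZ: "finite Z" using Z B finite_subset by blast
  have "B \<subseteq> (\<Union>z\<in>Z. cball z R)" using cov by (auto simp: dist_commute)
  hence "card B \<le> card (\<Union>z\<in>Z. cball z R)"
    by (intro card_mono) (use fZ bg_finite[OF bg] in auto)
  also have "\<dots> \<le> (\<Sum>z\<in>Z. card (cball z R))" by (rule card_UN_le[OF fZ])
  finally have "real (card B) \<le> (\<Sum>z\<in>Z. real (card (cball z R)))" by (simp flip: of_nat_sum)
  also have "\<dots> \<le> (\<Sum>z\<in>Z. ball_growth TYPE('a) R)" by (rule sum_mono) (rule bg_le[OF bg])
  finally show ?thesis by simp
qed

lemma bg_attained:
  assumes bg: "bounded_geometry TYPE('a::metric_space)"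
  shows "\<exists>y::'a. real (card (cball y l)) = ball_growth TYPE('a) l"
proof -
  obtain N where N: "\<forall>y::'a. finite (cball y (max l 1)) \<and> card (cball y (max l 1)) \<le> N"
    using bg unfolding bounded_geometry_def by (meson less_max_iff_disj zero_less_one)
  have le: "card (cball (y::'a) l) \<le> N" for y
  proof -
    have "card (cball y l) \<le> card (cball y (max l 1))"
      by (rule card_mono) (use N in auto)
    thus ?thesis using N by (meson order_trans)
  qed
  let ?S = "{real (card (cball (y::'a) l)) | y. True}"
  have "?S \<subseteq> real ` {0..N}" using le by auto
  hence fin: "finite ?S" by (rule finite_subset) auto
  have ne: "?S \<noteq> {}" by auto
  have "Sup ?S = Max ?S" by (rule cSup_eq_Max[OF fin ne])
  moreover have "Max ?S \<in> ?S" by (rule Max_in[OF fin ne])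
  ultimately have "Sup ?S \<in> ?S" by simp
  thus ?thesis unfolding ball_growth_def by auto
qed

lemma real_div_lower: "0 < q \<Longrightarrow> real m / real q - 1 \<le> real (m div q)"
proof -
  assume q: "0 < q"
  have "m < q * (m div q + 1)"
    using q by (metis add.commute div_mult_mod_eq mod_less_divisor distrib_left mult.commute mult_1 add_less_cancel_right)
  hence "real m < real q * (real (m div q) + 1)" by (metis of_nat_1 of_nat_add of_nat_less_iff of_nat_mult)
  hence "real m / real q < real (m div q) + 1" using q by (simp add: field_simps)
  thus ?thesis by simp
qed

lemma F_lower:
  assumes low: "\<And>n. K0 \<le> n \<Longrightarrow> ereal (real (N ^ ((n - K0) div (2*K)))) \<le> sep_count n R \<delta> x0"
    and N: "N \<ge> 1" and K: "K \<ge> 1"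
  shows "ereal (ln (real N) / (2 * real K)) \<le> limsup (\<lambda>n. ereal_ln (sep_count n R \<delta> x0) / ereal (real n))"
proof -
  define a where "a = (real K0 / (2 * real K) + 1) * ln (real N)"
  define b where "b = (\<lambda>n::nat. ln (real N) / (2 * real K) - a / real n)"
  have lN: "0 \<le> ln (real N)" using N by simp
  have ev: "\<forall>\<^sub>F n in sequentially. ereal (b n) \<le> ereal_ln (sep_count n R \<delta> x0) / ereal (real n)"
  proof (rule eventually_sequentiallyI[of "max K0 1"])
    fix n assume n: "max K0 1 \<le> n"
    define J where "J = (n - K0) div (2*K)"
    have "ereal (ln (real (N ^ J))) \<le> ereal_ln (sep_count n R \<delta> x0)"
      by (rule eln_ge) (use N low[of n] n in \<open>auto simp: J_def\<close>)
    hence "ereal (ln (real (N ^ J))) / ereal (real n) \<le> ereal_ln (sep_count n R \<delta> x0) / ereal (real n)"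
      using n by (intro ereal_divide_right_mono) auto
    moreover have "ereal (ln (real (N ^ J))) / ereal (real n) = ereal (real J * ln (real N) / real n)"
      using n N by (simp add: ln_realpow)
    moreover have "b n \<le> real J * ln (real N) / real n"
    proof -
      have "real (n - K0) / real (2*K) - 1 \<le> real J" unfolding J_def by (rule real_div_lower) (use K in simp)
      hence "(real (n - K0) / real (2*K) - 1) * ln (real N) \<le> real J * ln (real N)"
        using lN by (rule mult_right_mono)
      hence "(real (n - K0) / real (2*K) - 1) * ln (real N) / real n \<le> real J * ln (real N) / real n"
        using n by (intro divide_right_mono) auto
      moreover have "(real (n - K0) / real (2*K) - 1) * ln (real N) / real n = b n"
        unfolding b_def a_def using n K by (simp add: of_nat_diff field_simps)
      ultimately show ?thesis by simp
    qed
    ultimately have "ereal (real J * ln (real N) / real n) \<le> ereal_ln (sep_count n R \<delta> x0) / ereal (real n)"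
      "ereal (b n) \<le> ereal (real J * ln (real N) / real n)" by simp_all
    thus "ereal (b n) \<le> ereal_ln (sep_count n R \<delta> x0) / ereal (real n)" by (meson order_trans)
  qed
  have lim: "(\<lambda>n. ereal (b n)) \<longlonglongrightarrow> ereal (ln (real N) / (2 * real K))"
    unfolding b_def by (intro tendsto_intros lim_const_over_n[THEN tendsto_diff[OF tendsto_const], simplified])
  have "ereal (ln (real N) / (2 * real K)) = limsup (\<lambda>n. ereal (b n))"
    by (rule lim_imp_Limsup[OF _ lim, symmetric]) simp
  also have "\<dots> \<le> limsup (\<lambda>n. ereal_ln (sep_count n R \<delta> x0) / ereal (real n))"
    by (rule Limsup_mono[OF ev])
  finally show ?thesis .
qed

lemma eln_mono: "1 \<le> a \<Longrightarrow> a \<le> b \<Longrightarrow> ereal_ln a \<le> ereal_ln b"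
  by (cases a; cases b) (auto simp: ereal_ln_def)

lemma sep_anti:
  assumes "R \<le> R'"
  shows "sep_count n R' \<delta> x0 \<le> sep_count n R \<delta> x0"
  unfolding sep_count_def
proof (rule Sup_subset_mono, clarify)
  fix S assume "finite S" "S \<subseteq> delta_paths n \<delta> x0" "path_separated n R' S"
  moreover have "path_separated n R S" using \<open>path_separated n R' S\<close> assms
    unfolding path_separated_def by (meson le_less_trans)
  ultimately show "\<exists>S'. ereal (real (card S)) = ereal (real (card S')) \<and> finite S' \<and> S' \<subseteq> delta_paths n \<delta> x0 \<and> path_separated n R S'"
    by blast
qed

lemma F_anti:
  assumes "R \<le> R'" "\<delta> \<ge> 0"
  shows "limsup (\<lambda>n. ereal_ln (sep_count n R' \<delta> x0) / ereal (real n))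
       \<le> limsup (\<lambda>n. ereal_ln (sep_count n R \<delta> x0) / ereal (real n))"
proof (rule Limsup_mono, rule eventually_sequentiallyI[of 1])
  fix n :: nat assume "1 \<le> n"
  thus "ereal_ln (sep_count n R' \<delta> x0) / ereal (real n) \<le> ereal_ln (sep_count n R \<delta> x0) / ereal (real n)"
    by (intro ereal_divide_right_mono eln_mono sep_ge1 sep_anti assms) auto
qed

lemma inner_lower:
  assumes d: "\<delta> \<ge> 0" and ev: "\<forall>\<^sub>F R in at_top. M \<le> limsup (\<lambda>n. ereal_ln (sep_count n R \<delta> x0) / ereal (real n))"
  shows "M \<le> Lim at_top (\<lambda>R. limsup (\<lambda>n. ereal_ln (sep_count n R \<delta> (x0::'a::metric_space)) / ereal (real n)))"
proof -
  define f where "f = (\<lambda>R. limsup (\<lambda>n. ereal_ln (sep_count n R \<delta> x0) / ereal (real n)))"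
  define l where "l = (INF R. f R)"
  have lim: "(f \<longlongrightarrow> l) at_top"
  proof (rule decreasing_tendsto)
    show "\<forall>\<^sub>F n in at_top. l \<le> f n" unfolding l_def by (intro always_eventually allI INF_lower) simp
    fix x assume "l < x"
    then obtain R0 where "f R0 < x" unfolding l_def by (auto simp: INF_less_iff)
    have "\<forall>R\<ge>R0. f R < x"
    proof (intro allI impI)
      fix R assume "R0 \<le> R"
      have "f R \<le> f R0" unfolding f_def by (rule F_anti[OF \<open>R0 \<le> R\<close> d])
      thus "f R < x" using \<open>f R0 < x\<close> by (rule le_less_trans)
    qed
    thus "\<forall>\<^sub>F n in at_top. f n < x" unfolding eventually_at_top_linorder by blast
  qed
  have "M \<le> l" by (rule tendsto_lowerbound[OF lim]) (use ev in \<open>simp_all add: f_def\<close>)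
  moreover have "Lim at_top f = l" by (rule tendsto_Lim[OF _ lim]) simp
  ultimately show ?thesis unfolding f_def by simp
qed

lemma main_lower:
  fixes P :: "'a::metric_space \<Rightarrow> 'a \<Rightarrow> real \<Rightarrow> 'a" and x0 :: 'a
  assumes bg: "bounded_geometry TYPE('a)"
    and P0: "\<And>x x'. P x x' 0 = x" and P1: "\<And>x x'. P x x' (dist x x') = x'"
    and Pd: "\<And>x x' s t. s \<in> {0..dist x x'} \<Longrightarrow> t \<in> {0..dist x x'} \<Longrightarrow> dist (P x x' s) (P x x' t) \<le> C * \<bar>s - t\<bar> + A"
    and C: "C \<ge> 0" and \<tau>: "\<tau> > 0" and d: "C * \<tau> + A \<le> \<delta>"
    and c: "c > 0" and freq: "\<forall>L. \<exists>l\<ge>L. 2 * c \<le> ln (ball_growth TYPE('a) l) / l"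
    and R: "R > 0"
  shows "ereal (c * \<tau> / 2) \<le> limsup (\<lambda>n. ereal_ln (sep_count n R \<delta> x0) / ereal (real n))"
proof -
  define NR where "NR = ball_growth TYPE('a) R"
  define a where "a = ln NR"
  have NR1: "NR \<ge> 1" unfolding NR_def using bg_ge1[OF bg] R by simp
  have a0: "a \<ge> 0" unfolding a_def using NR1 by simp
  obtain l where l: "l \<ge> max 1 ((a + c*\<tau>)/c)" "2 * c \<le> ln (ball_growth TYPE('a) l) / l"
    using freq by blast
  have l0: "l > 0" using l by simp
  have cl: "c * l \<ge> a + c * \<tau>" using l(1) c by (simp add: field_simps)
  define V where "V = ball_growth TYPE('a) l"
  have V1: "V \<ge> 1" unfolding V_def using bg_ge1[OF bg] l0 by simp
  have lnV: "ln V \<ge> 2 * c * l" using l(2) l0 unfolding V_def by (simp add: field_simps)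
  obtain y :: 'a where y: "real (card (cball y l)) = V" using bg_attained[OF bg] unfolding V_def by blast
  obtain Z where Z: "Z \<subseteq> cball y l" "\<forall>z\<in>Z. \<forall>z'\<in>Z. z \<noteq> z' \<longrightarrow> dist z z' > R"
      "\<forall>b\<in>cball y l. \<exists>z\<in>Z. dist b z \<le> R"
    using max_sep_subset[OF bg_finite[OF bg, of y l], of R] R by auto
  have Zf: "finite Z" using Z(1) bg_finite[OF bg] finite_subset by blast
  have VZ: "V \<le> real (card Z) * NR"
    using card_cover[OF bg R bg_finite[OF bg] Z(1) Z(3)] y unfolding NR_def by simp
  define N where "N = card Z"
  have N1: "N \<ge> 1"
  proof (rule ccontr)
    assume "\<not> N \<ge> 1" hence "N = 0" by simp
    thus False using VZ V1 unfolding N_def by simp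
  qed
  have lnN: "ln (real N) \<ge> 2 * c * l - a"
  proof -
    have "V / NR \<le> real N" using VZ NR1 unfolding N_def by (simp add: field_simps)
    hence "ln (V / NR) \<le> ln (real N)" using V1 NR1 N1 by (subst ln_le_cancel_iff) auto
    moreover have "ln (V / NR) = ln V - a" unfolding a_def using V1 NR1 by (simp add: ln_div)
    ultimately show ?thesis using lnV by linarith
  qed
  define K where "K = nat \<lceil>l / \<tau>\<rceil>"
  have Kge: "real K \<ge> l / \<tau>" unfolding K_def by linarith
  have Kle: "real K \<le> l / \<tau> + 1"
  proof -
    have q: "0 < l / \<tau>" using l0 \<tau> by simp
    hence "real K = real_of_int \<lceil>l / \<tau>\<rceil>" unfolding K_def by simp
    thus ?thesis using of_int_ceiling_le_add_one[of "l / \<tau>"] by linarith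
  qed
  have K1: "K \<ge> 1"
  proof (rule ccontr)
    assume "\<not> K \<ge> 1" hence "K = 0" by simp
    hence "l / \<tau> \<le> 0" using Kge by simp
    thus False using l0 \<tau> by (simp add: divide_le_0_iff)
  qed
  have KZ: "\<forall>z\<in>Z. real K * \<tau> \<ge> dist y z"
  proof
    fix z assume "z \<in> Z"
    hence "dist y z \<le> l" using Z(1) by auto
    also have "l \<le> real K * \<tau>" using Kge \<tau> by (simp add: field_simps)
    finally show "real K * \<tau> \<ge> dist y z" .
  qed
  define K0 where "K0 = nat \<lceil>dist x0 y / \<tau>\<rceil>"
  have K0d: "real K0 * \<tau> \<ge> dist x0 y"
  proof -
    have "real K0 \<ge> dist x0 y / \<tau>" unfolding K0_def by linarith
    thus ?thesis using \<tau> by (simp add: field_simps)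
  qed
  have low: "ereal (real (N ^ ((n - K0) div (2*K)))) \<le> sep_count n R \<delta> x0" if "K0 \<le> n" for n
    unfolding N_def by (rule sep_lower[OF P0 P1 Pd C \<tau> d Zf KZ Z(2) K1 K0d that])
  have F: "ereal (ln (real N) / (2 * real K)) \<le> limsup (\<lambda>n. ereal_ln (sep_count n R \<delta> x0) / ereal (real n))"
    by (rule F_lower[OF low N1 K1])
  have "c * \<tau> / 2 \<le> ln (real N) / (2 * real K)"
  proof -
    have pos: "0 < 2 * real K" using K1 by simp
    have "c * \<tau> / 2 * (2 * real K) \<le> c * \<tau> / 2 * (2 * (l / \<tau> + 1))"
      using Kle c \<tau> by (intro mult_left_mono) auto
    also have "\<dots> = c * l + c * \<tau>" using \<tau> by (simp add: field_simps)
    also have "\<dots> \<le> ln (real N)" using lnN cl by linarith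
    finally show ?thesis using pos by (simp add: field_simps)
  qed
  thus ?thesis using F by (meson ereal_less_eq(3) order_trans)
qed

lemma part_ii:
  assumes qg: "quasigeodesic TYPE('a::metric_space)" and bg: "bounded_geometry TYPE('a)"
    and hyp: "Limsup at_top (\<lambda>l. ereal (ln (ball_growth TYPE('a) l) / l)) > 0"
  shows "coarse_entropy (x0::'a) = \<infinity>"
proof -
  obtain C A and P :: "'a \<Rightarrow> 'a \<Rightarrow> real \<Rightarrow> 'a" where CA: "C \<ge> 1" "A \<ge> 0"
    and P0: "\<And>x x'. P x x' 0 = x" and P1: "\<And>x x'. P x x' (dist x x') = x'"
    and Pd: "\<And>x x' s t. s \<in> {0..dist x x'} \<Longrightarrow> t \<in> {0..dist x x'} \<Longrightarrow> dist (P x x' s) (P x x' t) \<le> C * \<bar>s - t\<bar> + A"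
    using qg_obtain[OF qg] by metis
  have "\<not> (0 \<ge> Limsup at_top (\<lambda>l. ereal (ln (ball_growth TYPE('a) l) / l)))" using hyp by simp
  then obtain y where y: "y > 0" "\<not> eventually (\<lambda>l. y > ereal (ln (ball_growth TYPE('a) l) / l)) at_top"
    unfolding Limsup_le_iff by blast
  obtain c2 where c2: "0 < ereal c2" "ereal c2 < y" using ereal_dense2[OF y(1)] by blast
  define c where "c = c2 / 2"
  have c: "c > 0" using c2 unfolding c_def by simp
  have freq: "\<forall>L. \<exists>l\<ge>L. 2 * c \<le> ln (ball_growth TYPE('a) l) / l"
  proof
    fix L
    from y(2) obtain l where "l \<ge> L" "\<not> y > ereal (ln (ball_growth TYPE('a) l) / l)"
      unfolding eventually_at_top_linorder by blast
    hence "ereal c2 \<le> ereal (ln (ball_growth TYPE('a) l) / l)" using c2 by (meson less_le_trans not_le order_less_imp_le)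
    thus "\<exists>l\<ge>L. 2 * c \<le> ln (ball_growth TYPE('a) l) / l" using \<open>l \<ge> L\<close> unfolding c_def by auto
  qed
  have "((\<lambda>\<delta>. Lim at_top (\<lambda>R. limsup (\<lambda>n. ereal_ln (sep_count n R \<delta> x0) / ereal (real n)))) \<longlongrightarrow> \<infinity>) at_top"
    unfolding tendsto_PInfty
  proof
    fix r
    define D where "D = A + C + C * (2 * (\<bar>r\<bar> + 1) / c)"
    show "\<forall>\<^sub>F \<delta> in at_top. ereal r < Lim at_top (\<lambda>R. limsup (\<lambda>n. ereal_ln (sep_count n R \<delta> x0) / ereal (real n)))"
      unfolding eventually_at_top_linorder
    proof (rule exI[of _ D], intro allI impI)
      fix \<delta> assume \<delta>: "\<delta> \<ge> D"
      define \<tau> where "\<tau> = (\<delta> - A) / C"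
      have Cp: "C > 0" using CA by simp
      have cr: "0 \<le> 2 * (\<bar>r\<bar> + 1) / c" using c by simp
      have \<tau>1: "\<tau> \<ge> 1 + 2 * (\<bar>r\<bar> + 1) / c"
      proof -
        have "\<delta> - A \<ge> C * (1 + 2 * (\<bar>r\<bar> + 1) / c)" using \<delta> unfolding D_def by (simp add: algebra_simps)
        thus ?thesis unfolding \<tau>_def using Cp by (simp add: field_simps)
      qed
      have \<tau>p: "\<tau> > 0" using \<tau>1 cr by linarith
      have dC: "C * \<tau> + A \<le> \<delta>" unfolding \<tau>_def using Cp by simp
      have d0: "\<delta> \<ge> 0" using dC Cp \<tau>p CA by (smt (verit) mult_pos_pos)
      have rlt: "r < c * \<tau> / 2"
      proof -
        have "c * \<tau> \<ge> c * (1 + 2 * (\<bar>r\<bar> + 1) / c)" using \<tau>1 c by (intro mult_left_mono) auto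
        also have "c * (1 + 2 * (\<bar>r\<bar> + 1) / c) = c + 2 * (\<bar>r\<bar> + 1)" using c by (simp add: field_simps)
        finally have "c + 2 * (\<bar>r\<bar> + 1) \<le> c * \<tau>" .
        thus ?thesis using c abs_ge_self[of r] by (smt (verit) field_sum_of_halves)
      qed
      have "ereal (c * \<tau> / 2) \<le> Lim at_top (\<lambda>R. limsup (\<lambda>n. ereal_ln (sep_count n R \<delta> x0) / ereal (real n)))"
      proof (rule inner_lower[OF d0])
        show "\<forall>\<^sub>F R in at_top. ereal (c * \<tau> / 2) \<le> limsup (\<lambda>n. ereal_ln (sep_count n R \<delta> x0) / ereal (real n))"
          unfolding eventually_at_top_linorder
          by (rule exI[of _ 1], intro allI impI main_lower[OF bg P0 P1 Pd _ \<tau>p dC c freq]) (use CA in auto)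
      qed
      show "ereal r < Lim at_top (\<lambda>R. limsup (\<lambda>n. ereal_ln (sep_count n R \<delta> x0) / ereal (real n)))"
      proof -
        have "ereal r < ereal (c * \<tau> / 2)" using rlt by simp
        thus ?thesis using \<open>ereal (c * \<tau> / 2) \<le> _\<close> by (rule less_le_trans)
      qed
    qed
  qed
  thus ?thesis unfolding coarse_entropy_def by (intro tendsto_Lim) auto
qed

theorem mainTheorem16:
  assumes "quasigeodesic TYPE('a::metric_space)"
    and "bounded_geometry TYPE('a)"
  shows "(((\<lambda>l. ln (ball_growth TYPE('a) l) / l) \<longlongrightarrow> 0) at_top
            \<longrightarrow> (\<forall>x0::'a. coarse_entropy x0 = 0))
       \<and> (Limsup at_top (\<lambda>l. ereal (ln (ball_growth TYPE('a) l) / l)) > 0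
            \<longrightarrow> (\<forall>x0::'a. coarse_entropy x0 = \<infinity>))"
  using part_i[OF assms(2)] part_ii[OF assms] by blast
end
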